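(* Let $G$ be a permutation group on a finite set $\Omega$ of size $t$. If $G$ contains a regular normal subgroup, then $\mathrm{I}(G)\le \log t+1$.
   Context: Logarithms are to base $2$. An irredundant base for $G$ on $\Omega$ is an ordered sequence $[\omega_1,\dots,\omega_k]$ with $G>G_{\omega_1}>G_{\omega_1,\omega_2}>\dots>G_{\omega_1,\dots,\omega_k}=1$, all inclusions strict; $\mathrm{I}(G)$ is the maximum length of an irredundant base. *)

theory Defs
  imports Complex_Main "HOL-Algebra.Bij" "HOL-Algebra.Coset"
begin

definition perm_group :: "'a set \<Rightarrow> ('a \<Rightarrow> 'a) set \<Rightarrow> bool" where
  "perm_group \<Omega> G \<longleftrightarrow> subgroup G (BijGroup \<Omega>)"

definition perm_grp :: "'a set \<Rightarrow> ('a \<Rightarrow> 'a) set \<Rightarrow> ('a \<Rightarrow> 'a) monoid" where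
  "perm_grp \<Omega> G = (BijGroup \<Omega>)\<lparr>carrier := G\<rparr>"

definition regular_on :: "'a set \<Rightarrow> ('a \<Rightarrow> 'a) set \<Rightarrow> bool" where
  "regular_on \<Omega> N \<longleftrightarrow> (\<forall>\<alpha>\<in>\<Omega>. \<forall>\<beta>\<in>\<Omega>. \<exists>!g. g \<in> N \<and> g \<alpha> = \<beta>)"

definition pw_stab :: "('a \<Rightarrow> 'a) set \<Rightarrow> 'a list \<Rightarrow> ('a \<Rightarrow> 'a) set" where
  "pw_stab G ws = {g \<in> G. \<forall>w \<in> set ws. g w = w}"

definition irredundant_base :: "'a set \<Rightarrow> ('a \<Rightarrow> 'a) set \<Rightarrow> 'a list \<Rightarrow> bool" where
  "irredundant_base \<Omega> G ws \<longleftrightarrow>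
     set ws \<subseteq> \<Omega> \<and>
     (\<forall>i < length ws. pw_stab G (take (Suc i) ws) \<subset> pw_stab G (take i ws)) \<and>
     pw_stab G ws = {\<one>\<^bsub>BijGroup \<Omega>\<^esub>}"

text \<open>I(G): the maximum length of an irredundant base.\<close>
definition max_irredundant_base :: "'a set \<Rightarrow> ('a \<Rightarrow> 'a) set \<Rightarrow> nat" where
  "max_irredundant_base \<Omega> G = Max {length ws | ws. irredundant_base \<Omega> G ws}"

end

theory Submission
  imports Defs
begin

lemma perm_facts:
  assumes "perm_group \<Omega> G" "normal N (perm_grp \<Omega> G)"
  shows "G \<subseteq> Bij \<Omega>" "N \<subseteq> G"
    "\<And>n m. n \<in> N \<Longrightarrow> m \<in> N \<Longrightarrow> compose \<Omega> n m \<in> N"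
    "\<And>h n. h \<in> G \<Longrightarrow> n \<in> N \<Longrightarrow> compose \<Omega> (compose \<Omega> h n) (restrict (inv_into \<Omega> h) \<Omega>) \<in> N"
proof -
  have sg: "subgroup G (BijGroup \<Omega>)" using assms(1) perm_group_def by blast
  show GB: "G \<subseteq> Bij \<Omega>" using subgroup.subset[OF sg] by (simp add: BijGroup_def)
  have grp: "group (perm_grp \<Omega> G)" unfolding perm_grp_def
    using subgroup.subgroup_is_group[OF sg group_BijGroup] .
  have sn: "subgroup N (perm_grp \<Omega> G)" using assms(2) normal_def by blast
  show NG: "N \<subseteq> G" using subgroup.subset[OF sn] by (simp add: perm_grp_def)
  show "\<And>n m. n \<in> N \<Longrightarrow> m \<in> N \<Longrightarrow> compose \<Omega> n m \<in> N"
  proof -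
    fix n m assume "n \<in> N" "m \<in> N"
    then have "n \<otimes>\<^bsub>perm_grp \<Omega> G\<^esub> m \<in> N" using subgroup.m_closed[OF sn] by blast
    moreover have "n \<in> Bij \<Omega>" "m \<in> Bij \<Omega>" using \<open>n \<in> N\<close> \<open>m \<in> N\<close> NG GB by auto
    ultimately show "compose \<Omega> n m \<in> N" by (simp add: perm_grp_def BijGroup_def)
  qed
  show "\<And>h n. h \<in> G \<Longrightarrow> n \<in> N \<Longrightarrow> compose \<Omega> (compose \<Omega> h n) (restrict (inv_into \<Omega> h) \<Omega>) \<in> N"
  proof -
    fix h n assume h: "h \<in> G" and n: "n \<in> N"
    have "h \<otimes>\<^bsub>perm_grp \<Omega> G\<^esub> n \<otimes>\<^bsub>perm_grp \<Omega> G\<^esub> inv\<^bsub>perm_grp \<Omega> G\<^esub> h \<in> N"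
      using group.normal_inv_iff[OF grp] assms(2) h n by (auto simp: perm_grp_def)
    moreover have "inv\<^bsub>perm_grp \<Omega> G\<^esub> h = restrict (inv_into \<Omega> h) \<Omega>"
      using group.m_inv_consistent[OF group_BijGroup sg h] h GB inv_BijGroup
      by (auto simp: perm_grp_def)
    moreover have hB: "h \<in> Bij \<Omega>" "n \<in> Bij \<Omega>" using h n NG GB by auto
    moreover have "restrict (inv_into \<Omega> h) \<Omega> \<in> Bij \<Omega>" using restrict_inv_into_Bij[OF hB(1)] by simp
    ultimately show "compose \<Omega> (compose \<Omega> h n) (restrict (inv_into \<Omega> h) \<Omega>) \<in> N"
      by (simp add: perm_grp_def BijGroup_def compose_Bij)
  qed
qed

lemma key_commute:
  assumes "perm_group \<Omega> G" "normal N (perm_grp \<Omega> G)" "regular_on \<Omega> N"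
    and n: "n \<in> N" and h: "h \<in> G" and a: "\<alpha> \<in> \<Omega>" "h \<alpha> = \<alpha>" "h (n \<alpha>) = n \<alpha>"
    and x: "x \<in> \<Omega>"
  shows "h (n x) = n (h x)"
proof -
  note pf = perm_facts[OF assms(1,2)]
  define m where "m = compose \<Omega> (compose \<Omega> h n) (restrict (inv_into \<Omega> h) \<Omega>)"
  have mN: "m \<in> N" using pf(4)[OF h n] m_def by simp
  have hB: "h \<in> Bij \<Omega>" "n \<in> Bij \<Omega>" using h n pf(1,2) by auto
  then have bh: "bij_betw h \<Omega> \<Omega>" "bij_betw n \<Omega> \<Omega>" by (auto simp: Bij_def)
  have mval: "m y = h (n (inv_into \<Omega> h y))" if "y \<in> \<Omega>" for y
    using that bh by (simp add: m_def compose_def bij_betw_def inv_into_into)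
  have ia: "inv_into \<Omega> h \<alpha> = \<alpha>" using a bh by (metis bij_betw_def inv_into_f_f)
  have "m \<alpha> = n \<alpha>" using mval[OF a(1)] ia a by simp
  moreover have na: "n \<alpha> \<in> \<Omega>" using bh a by (meson bij_betwE)
  ultimately have "m = n" using assms(3) mN n a(1) unfolding regular_on_def by blast
  moreover have "h x \<in> \<Omega>" using bh x by (meson bij_betwE)
  ultimately have "n (h x) = h (n (inv_into \<Omega> h (h x)))" using mval by metis
  also have "\<dots> = h (n x)" using bh x by (metis bij_betw_def inv_into_f_f)
  finally show ?thesis by simp
qed

lemma doubling:
  assumes "perm_group \<Omega> G" "normal N (perm_grp \<Omega> G)" "regular_on \<Omega> N" "finite \<Omega>"
    and H: "H \<subseteq> G" "H' \<subseteq> H" and a0: "\<alpha> \<in> \<Omega>" "\<forall>h\<in>H. h \<alpha> = \<alpha>"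
    and b: "b \<in> {x\<in>\<Omega>. \<forall>h\<in>H'. h x = x}" "b \<notin> {x\<in>\<Omega>. \<forall>h\<in>H. h x = x}"
  shows "2 * card {x\<in>\<Omega>. \<forall>h\<in>H. h x = x} \<le> card {x\<in>\<Omega>. \<forall>h\<in>H'. h x = x}"
proof -
  have a: "\<alpha> \<in> \<Omega>" "\<And>h. h \<in> H \<Longrightarrow> h \<alpha> = \<alpha>" using a0 by auto
  define A where "A = {x\<in>\<Omega>. \<forall>h\<in>H. h x = x}"
  define B where "B = {x\<in>\<Omega>. \<forall>h\<in>H'. h x = x}"
  note pf = perm_facts[OF assms(1,2)]
  have reg: "\<And>u v. u \<in> \<Omega> \<Longrightarrow> v \<in> \<Omega> \<Longrightarrow> \<exists>g. g \<in> N \<and> g u = v"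
    using assms(3) unfolding regular_on_def by blast
  have bO: "b \<in> \<Omega>" using b by simp
  obtain n where n: "n \<in> N" "n \<alpha> = b" using reg[OF a(1) bO] by blast
  have bn: "bij_betw n \<Omega> \<Omega>" using n pf(1,2) by (auto simp: Bij_def)
  have ncomm: "h (n x) = n (h x)" if "h \<in> H'" "x \<in> \<Omega>" for h x
    using key_commute[OF assms(1-3) n(1), of h \<alpha> x] that H a b n(2) by auto
  have AB: "A \<subseteq> B" using H(2) by (auto simp: A_def B_def)
  have nAB: "n ` A \<subseteq> B"
  proof
    fix y assume "y \<in> n ` A"
    then obtain x where x: "x \<in> A" "y = n x" by blast
    have "x \<in> \<Omega>" using x A_def by simp
    then have "y \<in> \<Omega>" using bn x by (meson bij_betwE)
    moreover have "\<forall>h\<in>H'. h y = y"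
    proof
      fix h assume "h \<in> H'"
      have "x \<in> B" using x AB by blast
      then have "h x = x" using \<open>h \<in> H'\<close> B_def by simp
      then show "h y = y" using ncomm[OF \<open>h \<in> H'\<close> \<open>x \<in> \<Omega>\<close>] x by simp
    qed
    ultimately show "y \<in> B" by (simp add: B_def)
  qed
  have disj: "n ` A \<inter> A = {}"
  proof (rule ccontr)
    assume "n ` A \<inter> A \<noteq> {}"
    then obtain x where x: "x \<in> A" "n x \<in> A" by blast
    have xO: "x \<in> \<Omega>" using x A_def by simp
    obtain c where c: "c \<in> N" "c \<alpha> = x" using reg[OF a(1) xO] by blast
    have bc: "bij_betw c \<Omega> \<Omega>" using c pf(1,2) by (auto simp: Bij_def)
    define m where "m = compose \<Omega> n c"
    have mN: "m \<in> N" using pf(3)[OF n(1) c(1)] m_def by simp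
    have ma: "m \<alpha> = n x" using a(1) c by (simp add: m_def compose_def)
    have ccomm: "h (c y) = c (h y)" if "h \<in> H" "y \<in> \<Omega>" for h y
      using key_commute[OF assms(1-3) c(1), of h \<alpha> y] that H a x c(2) A_def by auto
    have mcomm: "h (m y) = m (h y)" if "h \<in> H" "y \<in> \<Omega>" for h y
      using key_commute[OF assms(1-3) mN, of h \<alpha> y] that H a x ma A_def by auto
    have "\<alpha> \<in> c ` \<Omega>" using bij_betw_imp_surj_on[OF bc] a(1) by simp
    then obtain y where y: "y \<in> \<Omega>" "c y = \<alpha>" by (metis imageE)
    have "b \<in> A"
    proof -
      have "\<forall>h\<in>H. h b = b"
      proof
        fix h assume h: "h \<in> H"
        have hB: "bij_betw h \<Omega> \<Omega>" using h H pf(1) by (auto simp: Bij_def)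
        have hy: "h y \<in> \<Omega>" using hB y by (meson bij_betwE)
        have "h b = h (m y)" using y n by (simp add: m_def compose_def)
        also have "\<dots> = m (h y)" using mcomm h y by simp
        also have "\<dots> = n (c (h y))" using hy by (simp add: m_def compose_def)
        also have "\<dots> = n (h (c y))" using ccomm h y by simp
        also have "\<dots> = b" using y a(2)[OF h] n by simp
        finally show "h b = b" .
      qed
      then show ?thesis using bO A_def by simp
    qed
    then show False using b A_def by simp
  qed
  have fB: "finite B" using assms(4) B_def by simp
  have fA: "finite A" using AB fB finite_subset by blast
  have "card A + card (n ` A) = card (A \<union> n ` A)"
    using card_Un_disjoint[OF fA finite_imageI[OF fA]] disj by (simp add: Int_commute)
  also have "\<dots> \<le> card B" by (rule card_mono[OF fB]) (use AB nAB in blast)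
  finally have "card A + card (n ` A) \<le> card B" .
  moreover have "inj_on n A" using bij_betw_imp_inj_on[OF bn]
    by (rule inj_on_subset) (auto simp: A_def)
  then have "card (n ` A) = card A" by (rule card_image)
  ultimately show ?thesis by (simp add: A_def B_def)
qed

lemma pw_stab_snoc: "pw_stab G (ws @ [x]) = pw_stab G ws \<inter> {g. g x = x}"
  by (auto simp: pw_stab_def)

lemma exists_irr:
  "\<exists>ws. set ws \<subseteq> set xs \<and> (\<forall>i<length ws. pw_stab G (take (Suc i) ws) \<subset> pw_stab G (take i ws))
      \<and> pw_stab G ws = pw_stab G xs"
proof (induction xs rule: rev_induct)
  case Nil
  then show ?case by (intro exI[of _ "[]"]) simp
next
  case (snoc x xs)
  then obtain ws where ws: "set ws \<subseteq> set xs"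
    "\<forall>i<length ws. pw_stab G (take (Suc i) ws) \<subset> pw_stab G (take i ws)"
    "pw_stab G ws = pw_stab G xs" by blast
  show ?case
  proof (cases "pw_stab G (ws @ [x]) \<subset> pw_stab G ws")
    case True
    have "\<forall>i<length (ws@[x]). pw_stab G (take (Suc i) (ws@[x])) \<subset> pw_stab G (take i (ws@[x]))"
    proof (intro allI impI)
      fix i assume i: "i < length (ws@[x])"
      show "pw_stab G (take (Suc i) (ws@[x])) \<subset> pw_stab G (take i (ws@[x]))"
      proof (cases "i < length ws")
        case True
        then show ?thesis using ws(2) by simp
      next
        case False
        then have "i = length ws" using i by simp
        then show ?thesis using \<open>pw_stab G (ws @ [x]) \<subset> pw_stab G ws\<close> by simp
      qed
    qed
    moreover have "pw_stab G (ws@[x]) = pw_stab G (xs@[x])" using ws(3) by (simp add: pw_stab_snoc)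
    ultimately show ?thesis using ws(1) by (intro exI[of _ "ws@[x]"]) auto
  next
    case False
    then have "pw_stab G ws = pw_stab G (ws @ [x])" by (auto simp: pw_stab_snoc)
    then have "pw_stab G ws = pw_stab G (xs@[x])" using ws(3) by (simp add: pw_stab_snoc)
    then show ?thesis using ws by (intro exI[of _ ws]) auto
  qed
qed

lemma irr_exists:
  assumes "finite \<Omega>" "perm_group \<Omega> G"
  shows "\<exists>ws. irredundant_base \<Omega> G ws"
proof -
  obtain xs where xs: "set xs = \<Omega>" using finite_list[OF assms(1)] by blast
  obtain ws where ws: "set ws \<subseteq> set xs" "\<forall>i<length ws. pw_stab G (take (Suc i) ws) \<subset> pw_stab G (take i ws)"
      "pw_stab G ws = pw_stab G xs" using exists_irr[of xs G] by (elim exE conjE)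
  have sg: "subgroup G (BijGroup \<Omega>)" using assms(2) perm_group_def by blast
  have GB: "G \<subseteq> Bij \<Omega>" using subgroup.subset[OF sg] by (simp add: BijGroup_def)
  have one: "(\<lambda>x\<in>\<Omega>. x) \<in> G" using subgroup.one_closed[OF sg] by (simp add: BijGroup_def)
  have "pw_stab G xs = {\<one>\<^bsub>BijGroup \<Omega>\<^esub>}"
  proof
    show "pw_stab G xs \<subseteq> {\<one>\<^bsub>BijGroup \<Omega>\<^esub>}"
    proof
      fix g assume g: "g \<in> pw_stab G xs"
      then have "g \<in> extensional \<Omega>" using GB Bij_imp_extensional by (auto simp: pw_stab_def)
      moreover have "\<forall>x\<in>\<Omega>. g x = x" using g xs by (auto simp: pw_stab_def)
      ultimately have "g = (\<lambda>x\<in>\<Omega>. x)" by (auto simp: fun_eq_iff extensional_def)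
      then show "g \<in> {\<one>\<^bsub>BijGroup \<Omega>\<^esub>}" by (simp add: BijGroup_def)
    qed
    show "{\<one>\<^bsub>BijGroup \<Omega>\<^esub>} \<subseteq> pw_stab G xs" using one xs by (auto simp: pw_stab_def BijGroup_def)
  qed
  then show ?thesis using ws xs unfolding irredundant_base_def by (intro exI[of _ ws]) auto
qed

lemma irr_bound:
  assumes "perm_group \<Omega> G" "normal N (perm_grp \<Omega> G)" "regular_on \<Omega> N" "finite \<Omega>"
    and t: "card \<Omega> = t" and ws: "irredundant_base \<Omega> G ws"
  shows "real (length ws) \<le> log 2 (real t) + 1"
proof (cases "length ws = 0")
  case True
  then show ?thesis
  proof (cases "t = 0")
    case True then show ?thesis using \<open>length ws = 0\<close> by (simp add: log_def)
  next
    case False then show ?thesis using \<open>length ws = 0\<close> by simp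
  qed
next
  case False
  define k where "k = length ws"
  define F where "F i = {x\<in>\<Omega>. \<forall>h\<in>pw_stab G (take i ws). h x = x}" for i
  have sO: "set ws \<subseteq> \<Omega>" and ch: "\<And>i. i < k \<Longrightarrow> pw_stab G (take (Suc i) ws) \<subset> pw_stab G (take i ws)"
    using ws unfolding irredundant_base_def k_def by auto
  have k1: "1 \<le> k" using False k_def by (simp add: Suc_le_eq)
  have "ws ! 0 \<in> set ws" using k1 k_def by (intro nth_mem) (simp add: Suc_le_eq)
  then have a: "ws ! 0 \<in> \<Omega>" using sO by blast
  have main: "1 \<le> i \<Longrightarrow> i \<le> k \<Longrightarrow> 2 ^ (i - 1) \<le> card (F i)" for i
  proof (induction i)
    case 0 then show ?case by simp
  next
    case (Suc i)
    show ?case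
    proof (cases "i = 0")
      case True
      have t1: "take 1 ws = [ws ! 0]" using k1 k_def by (cases ws) auto
      have "ws ! 0 \<in> F 1" using a t1 by (auto simp: F_def pw_stab_def)
      moreover have "finite (F 1)" using assms(4) by (simp add: F_def)
      ultimately have "card (F 1) \<noteq> 0" by auto
      then have "card (F 1) \<ge> 1" by simp
      then show ?thesis using True by simp
    next
      case False
      then have i1: "1 \<le> i" and ik: "i < k" using Suc.prems by auto
      have IH: "2 ^ (i - 1) \<le> card (F i)" using Suc.IH i1 ik by simp
      have tk: "take (Suc i) ws = take i ws @ [ws ! i]" using ik k_def by (simp add: take_Suc_conv_app_nth)
      have wi: "ws ! i \<in> \<Omega>" using ik k_def sO by (metis nth_mem subsetD)
      have sub: "pw_stab G (take (Suc i) ws) \<subseteq> pw_stab G (take i ws)" using ch[OF ik] by blast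
      have fix0: "h (ws ! 0) = ws ! 0" if "h \<in> pw_stab G (take i ws)" for h
      proof -
        have e: "take i ws ! 0 = ws ! 0" using i1 by simp
        have "0 < length (take i ws)" using i1 ik k_def by simp
        then have "take i ws ! 0 \<in> set (take i ws)" by (rule nth_mem)
        then have "ws ! 0 \<in> set (take i ws)" using e by simp
        then show ?thesis using that by (auto simp: pw_stab_def)
      qed
      have bin: "ws ! i \<in> {x\<in>\<Omega>. \<forall>h\<in>pw_stab G (take (Suc i) ws). h x = x}"
        using wi tk by (auto simp: pw_stab_def)
      have bnot: "ws ! i \<notin> {x\<in>\<Omega>. \<forall>h\<in>pw_stab G (take i ws). h x = x}"
      proof
        assume "ws ! i \<in> {x\<in>\<Omega>. \<forall>h\<in>pw_stab G (take i ws). h x = x}"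
        then have "pw_stab G (take (Suc i) ws) = pw_stab G (take i ws)"
          using tk by (auto simp: pw_stab_snoc)
        then show False using ch[OF ik] by simp
      qed
      have "2 * card (F i) \<le> card (F (Suc i))"
      proof -
        have HG: "pw_stab G (take i ws) \<subseteq> G" by (auto simp: pw_stab_def)
        have f0: "\<forall>h\<in>pw_stab G (take i ws). h (ws ! 0) = ws ! 0" using fix0 by blast
        have d: "2 * card {x\<in>\<Omega>. \<forall>h\<in>pw_stab G (take i ws). h x = x}
            \<le> card {x\<in>\<Omega>. \<forall>h\<in>pw_stab G (take (Suc i) ws). h x = x}"
          by (rule doubling[OF assms(1-4) HG sub a f0 bin bnot])
        show ?thesis using d by (simp only: F_def)
      qed
      then show ?thesis using IH i1 by (cases i) auto
    qed
  qed
  have "2 ^ (k - 1) \<le> card (F k)" using main k1 by simp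
  also have "\<dots> \<le> t" using t assms(4) by (auto simp: F_def intro!: card_mono)
  finally have le: "2 ^ (k - 1) \<le> t" .
  have "(1::nat) \<le> 2 ^ (k - 1)" by simp
  then have tpos: "0 < real t" using le by linarith
  have "real (2 ^ (k - 1)) \<le> real t" using le by (simp only: of_nat_le_iff)
  then have "(2::real) powr (real (k - 1)) \<le> real t"
    by (simp add: powr_realpow)
  then have "real (k - 1) \<le> log 2 (real t)" using le_log_iff[of 2 "real t"] tpos by simp
  then show ?thesis using k1 k_def by simp
qed

theorem proposition3p1:
  fixes \<Omega> :: "'a set" and G N :: "('a \<Rightarrow> 'a) set" and t :: nat
  assumes "finite \<Omega>" and "card \<Omega> = t"
    and "perm_group \<Omega> G"
    and "normal N (perm_grp \<Omega> G)"
    and "regular_on \<Omega> N"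
  shows "real (max_irredundant_base \<Omega> G) \<le> log 2 (real t) + 1"
proof -
  define S where "S = {length ws | ws. irredundant_base \<Omega> G ws}"
  have bnd: "\<And>k. k \<in> S \<Longrightarrow> real k \<le> log 2 (real t) + 1"
    using irr_bound[OF assms(3,4,5,1,2)] unfolding S_def by blast
  have "S \<subseteq> {..nat (ceiling (log 2 (real t) + 1))}"
  proof
    fix k assume "k \<in> S"
    then have "real k \<le> log 2 (real t) + 1" by (rule bnd)
    then have "ceiling (real k) \<le> ceiling (log 2 (real t) + 1)" by (rule ceiling_mono)
    then show "k \<in> {..nat (ceiling (log 2 (real t) + 1))}" by simp
  qed
  then have fS: "finite S" using finite_subset by blast
  have "S \<noteq> {}" using irr_exists[OF assms(1,3)] S_def by blast
  then have "Max S \<in> S" using fS Max_in by blast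
  then show ?thesis using bnd unfolding max_irredundant_base_def S_def by blast
qed
end
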